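(* Let $\rho_1,\rho_2:[a,b]\to\mathbb{R}$ be such that each $\rho_i$ is continuous on $[a,b]$ except at the points of a finite set $D_i\subset[a,b]$, at which it has discontinuities of the first kind (the one-sided limits exist and are finite), and assume $D_1\cap D_2=\emptyset$. Let $(\rho_1^\epsilon)$, $(\rho_2^\epsilon)$ be families of functions on $[a,b]$ with $\lim_{\epsilon\to0}\rho_1^\epsilon=\rho_1$ and $\lim_{\epsilon\to0}\rho_2^\epsilon=\rho_2$ on $[a,b]$. Then $\lim_{\epsilon\to0}(\rho_1^\epsilon+\rho_2^\epsilon)=\rho_1+\rho_2$ on $[a,b]$.
   Context: For functions $\rho,\hat\rho:[a,b]\to\mathbb{R}$ and $\Delta>0$, write $\rho\in O(\hat\rho,\Delta)$ on $[a,b]$ iff for every $x\in[a,b]$: $\inf_{y\in[a,b],|y-x|\le\Delta}\hat\rho(y)-\Delta<\rho(x)<\sup_{y\in[a,b],|y-x|\le\Delta}\hat\rho(y)+\Delta$. For a family $(\rho^\epsilon)_{\epsilon>0}$, $\lim_{\epsilon\to0}\rho^\epsilon=\hat\rho$ on $[a,b]$ means: for every $\Delta>0$ there is $\epsilon_0>0$ with $\rho^\epsilon\in O(\hat\rho,\Delta)$ on $[a,b]$ for all $\epsilon\in(0,\epsilon_0)$. *)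

theory Defs
  imports "HOL-Analysis.Analysis"
begin

definition in_O :: "real \<Rightarrow> real \<Rightarrow> (real \<Rightarrow> real) \<Rightarrow> (real \<Rightarrow> real) \<Rightarrow> real \<Rightarrow> bool" where
  "in_O a b rho rhohat Delta \<longleftrightarrow>
     (\<forall>x\<in>{a..b}.
        (INF y\<in>{y\<in>{a..b}. \<bar>y - x\<bar> \<le> Delta}. rhohat y) - Delta < rho x \<and>
        rho x < (SUP y\<in>{y\<in>{a..b}. \<bar>y - x\<bar> \<le> Delta}. rhohat y) + Delta)"

definition family_lim :: "real \<Rightarrow> real \<Rightarrow> (real \<Rightarrow> real \<Rightarrow> real) \<Rightarrow> (real \<Rightarrow> real) \<Rightarrow> bool" where
  "family_lim a b rhoe rhohat \<longleftrightarrow>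
     (\<forall>Delta>0. \<exists>eps0>0. \<forall>eps. 0 < eps \<and> eps < eps0 \<longrightarrow> in_O a b (rhoe eps) rhohat Delta)"

definition piecewise_cont_first_kind :: "real \<Rightarrow> real \<Rightarrow> real set \<Rightarrow> (real \<Rightarrow> real) \<Rightarrow> bool" where
  "piecewise_cont_first_kind a b D rho \<longleftrightarrow>
     finite D \<and> D \<subseteq> {a..b} \<and>
     (\<forall>x\<in>{a..b} - D. continuous (at x within {a..b}) rho) \<and>
     (\<forall>d\<in>D. (a < d \<longrightarrow> (\<exists>L. (rho \<longlongrightarrow> L) (at_left d))) \<and>
             (d < b \<longrightarrow> (\<exists>R. (rho \<longlongrightarrow> R) (at_right d))))"

end

theory Submission
  imports Defs
begin

lemma local_bdd:
  assumes pc: "piecewise_cont_first_kind a b D f" and x: "x \<in> {a..b}"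
  shows "\<exists>r>0. \<exists>M. \<forall>y\<in>{a..b}. dist y x < r \<longrightarrow> \<bar>f y\<bar> \<le> M"
proof (cases "x \<in> D")
  case False
  with pc x have "continuous (at x within {a..b}) f"
    unfolding piecewise_cont_first_kind_def by blast
  then obtain r where r: "r > 0" "\<forall>y\<in>{a..b}. dist y x < r \<longrightarrow> dist (f y) (f x) < 1"
    unfolding continuous_within_eps_delta by (meson zero_less_one)
  have "\<forall>y\<in>{a..b}. dist y x < r \<longrightarrow> \<bar>f y\<bar> \<le> \<bar>f x\<bar> + 1"
  proof (intro ballI impI)
    fix y assume "y \<in> {a..b}" "dist y x < r"
    with r have "\<bar>f y - f x\<bar> < 1" by (auto simp: dist_real_def)
    then show "\<bar>f y\<bar> \<le> \<bar>f x\<bar> + 1" by linarith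
  qed
  then show ?thesis using r(1) by blast
next
  case True
  have left: "\<exists>rl>0. \<exists>Ml. \<forall>y\<in>{a..b}. y < x \<longrightarrow> x - y < rl \<longrightarrow> \<bar>f y\<bar> \<le> Ml"
  proof (cases "a < x")
    case True
    with pc \<open>x \<in> D\<close> obtain L where L: "(f \<longlongrightarrow> L) (at_left x)"
      unfolding piecewise_cont_first_kind_def by blast
    then have "eventually (\<lambda>y. dist (f y) L < 1) (at_left x)"
      by (simp add: tendsto_iff)
    then obtain b' where b': "b' < x" "\<forall>y>b'. y < x \<longrightarrow> dist (f y) L < 1"
      unfolding eventually_at_left_field by blast
    have "\<forall>y\<in>{a..b}. y < x \<longrightarrow> x - y < x - b' \<longrightarrow> \<bar>f y\<bar> \<le> \<bar>L\<bar> + 1"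
    proof (intro ballI impI)
      fix y assume "y < x" "x - y < x - b'"
      with b' have "\<bar>f y - L\<bar> < 1" by (auto simp: dist_real_def)
      then show "\<bar>f y\<bar> \<le> \<bar>L\<bar> + 1" by linarith
    qed
    moreover have "x - b' > 0" using b' by simp
    ultimately show ?thesis by blast
  next
    case False
    then show ?thesis by (intro exI[of _ 1]) auto
  qed
  have right: "\<exists>rr>0. \<exists>Mr. \<forall>y\<in>{a..b}. x < y \<longrightarrow> y - x < rr \<longrightarrow> \<bar>f y\<bar> \<le> Mr"
  proof (cases "x < b")
    case True
    with pc \<open>x \<in> D\<close> obtain R where R: "(f \<longlongrightarrow> R) (at_right x)"
      unfolding piecewise_cont_first_kind_def by blast
    then have "eventually (\<lambda>y. dist (f y) R < 1) (at_right x)"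
      by (simp add: tendsto_iff)
    then obtain b' where b': "b' > x" "\<forall>y>x. y < b' \<longrightarrow> dist (f y) R < 1"
      unfolding eventually_at_right_field by blast
    have "\<forall>y\<in>{a..b}. x < y \<longrightarrow> y - x < b' - x \<longrightarrow> \<bar>f y\<bar> \<le> \<bar>R\<bar> + 1"
    proof (intro ballI impI)
      fix y assume "x < y" "y - x < b' - x"
      with b' have "\<bar>f y - R\<bar> < 1" by (auto simp: dist_real_def)
      then show "\<bar>f y\<bar> \<le> \<bar>R\<bar> + 1" by linarith
    qed
    moreover have "b' - x > 0" using b' by simp
    ultimately show ?thesis by blast
  next
    case False
    then show ?thesis using x by (intro exI[of _ 1]) auto
  qed
  obtain rl Ml where l: "rl > 0" "\<forall>y\<in>{a..b}. y < x \<longrightarrow> x - y < rl \<longrightarrow> \<bar>f y\<bar> \<le> Ml"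
    using left by blast
  obtain rr Mr where r: "rr > 0" "\<forall>y\<in>{a..b}. x < y \<longrightarrow> y - x < rr \<longrightarrow> \<bar>f y\<bar> \<le> Mr"
    using right by blast
  have "\<forall>y\<in>{a..b}. dist y x < min rl rr \<longrightarrow> \<bar>f y\<bar> \<le> max (max Ml Mr) \<bar>f x\<bar>"
  proof (intro ballI impI)
    fix y assume y: "y \<in> {a..b}" "dist y x < min rl rr"
    consider "y < x" | "y = x" | "x < y" by linarith
    then show "\<bar>f y\<bar> \<le> max (max Ml Mr) \<bar>f x\<bar>"
    proof cases
      case 1 with l y show ?thesis by (fastforce simp: dist_real_def)
    next
      case 2 then show ?thesis by simp
    next
      case 3 with r y show ?thesis by (fastforce simp: dist_real_def)
    qed
  qed
  moreover have "min rl rr > 0" using l r by simp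
  ultimately show ?thesis by blast
qed

lemma global_bdd:
  assumes pc: "piecewise_cont_first_kind a b D f"
  shows "\<exists>M. \<forall>y\<in>{a..b}. \<bar>f y\<bar> \<le> M"
proof -
  obtain r M where rM: "\<And>x. x \<in> {a..b} \<Longrightarrow> r x > 0 \<and> (\<forall>y\<in>{a..b}. dist y x < r x \<longrightarrow> \<bar>f y\<bar> \<le> M x)"
    using local_bdd[OF pc] by metis
  have cov: "{a..b} \<subseteq> (\<Union>x\<in>{a..b}. ball x (r x))"
    using rM by force
  obtain C where C: "C \<subseteq> {a..b}" "finite C" "{a..b} \<subseteq> (\<Union>x\<in>C. ball x (r x))"
    by (rule compactE_image[OF compact_Icc _ cov]) auto
  show ?thesis
  proof (intro exI[of _ "\<Sum>c\<in>C. \<bar>M c\<bar>"] ballI)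
    fix y assume y: "y \<in> {a..b}"
    then obtain c where c: "c \<in> C" "y \<in> ball c (r c)" using C by blast
    then have "\<bar>f y\<bar> \<le> M c" using rM[of c] C y by (auto simp: dist_commute)
    also have "\<dots> \<le> \<bar>M c\<bar>" by simp
    also have "\<dots> \<le> (\<Sum>c\<in>C. \<bar>M c\<bar>)"
      by (rule member_le_sum) (use c C in auto)
    finally show "\<bar>f y\<bar> \<le> (\<Sum>c\<in>C. \<bar>M c\<bar>)" .
  qed
qed

lemma osc:
  assumes pc1: "piecewise_cont_first_kind a b D1 rho1"
    and pc2: "piecewise_cont_first_kind a b D2 rho2"
    and disj: "D1 \<inter> D2 = {}" and eta: "\<eta> > 0"
  shows "\<exists>\<delta>>0. \<forall>x\<in>{a..b}.
    (\<forall>y\<in>{a..b}. \<forall>z\<in>{a..b}. \<bar>y - x\<bar> \<le> \<delta> \<longrightarrow> \<bar>z - x\<bar> \<le> \<delta> \<longrightarrow> \<bar>rho1 y - rho1 z\<bar> < \<eta>) \<or>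
    (\<forall>y\<in>{a..b}. \<forall>z\<in>{a..b}. \<bar>y - x\<bar> \<le> \<delta> \<longrightarrow> \<bar>z - x\<bar> \<le> \<delta> \<longrightarrow> \<bar>rho2 y - rho2 z\<bar> < \<eta>)"
proof -
  have loc: "\<exists>r>0. (\<forall>y\<in>{a..b}. dist y x < r \<longrightarrow> \<bar>rho1 y - rho1 x\<bar> < \<eta>/2) \<or>
                   (\<forall>y\<in>{a..b}. dist y x < r \<longrightarrow> \<bar>rho2 y - rho2 x\<bar> < \<eta>/2)"
    if x: "x \<in> {a..b}" for x
  proof (cases "x \<in> D1")
    case False
    with pc1 x have "continuous (at x within {a..b}) rho1"
      unfolding piecewise_cont_first_kind_def by blast
    then obtain r where "r > 0" "\<forall>y\<in>{a..b}. dist y x < r \<longrightarrow> dist (rho1 y) (rho1 x) < \<eta>/2"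
      unfolding continuous_within_eps_delta using eta by (meson half_gt_zero)
    then show ?thesis by (auto simp: dist_real_def)
  next
    case True
    with disj have "x \<notin> D2" by blast
    with pc2 x have "continuous (at x within {a..b}) rho2"
      unfolding piecewise_cont_first_kind_def by blast
    then obtain r where "r > 0" "\<forall>y\<in>{a..b}. dist y x < r \<longrightarrow> dist (rho2 y) (rho2 x) < \<eta>/2"
      unfolding continuous_within_eps_delta using eta by (meson half_gt_zero)
    then show ?thesis by (auto simp: dist_real_def)
  qed
  obtain r where r: "\<And>x. x \<in> {a..b} \<Longrightarrow> r x > 0 \<and>
      ((\<forall>y\<in>{a..b}. dist y x < r x \<longrightarrow> \<bar>rho1 y - rho1 x\<bar> < \<eta>/2) \<or>
       (\<forall>y\<in>{a..b}. dist y x < r x \<longrightarrow> \<bar>rho2 y - rho2 x\<bar> < \<eta>/2))"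
    using loc by metis
  have cov: "{a..b} \<subseteq> \<Union>((\<lambda>x. ball x (r x)) ` {a..b})"
    using r by force
  obtain e where e: "0 < e" "\<And>x. x \<in> {a..b} \<Longrightarrow> \<exists>G \<in> (\<lambda>x. ball x (r x)) ` {a..b}. ball x e \<subseteq> G"
    using Heine_Borel_lemma[OF compact_Icc cov] by auto
  show ?thesis
  proof (intro exI[of _ "e/2"] conjI ballI)
    show "e/2 > 0" using e by simp
    fix x assume x: "x \<in> {a..b}"
    then obtain x0 where x0: "x0 \<in> {a..b}" "ball x e \<subseteq> ball x0 (r x0)" using e by blast
    have inb: "dist y x0 < r x0" if "\<bar>y - x\<bar> \<le> e/2" for y
    proof -
      have "dist x y < e" using that e(1) by (simp add: dist_real_def abs_minus_commute)
      then have "y \<in> ball x e" by simp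
      with x0 show ?thesis by (auto simp: dist_commute)
    qed
    from r[OF x0(1)] show "(\<forall>y\<in>{a..b}. \<forall>z\<in>{a..b}. \<bar>y - x\<bar> \<le> e/2 \<longrightarrow> \<bar>z - x\<bar> \<le> e/2 \<longrightarrow> \<bar>rho1 y - rho1 z\<bar> < \<eta>) \<or>
    (\<forall>y\<in>{a..b}. \<forall>z\<in>{a..b}. \<bar>y - x\<bar> \<le> e/2 \<longrightarrow> \<bar>z - x\<bar> \<le> e/2 \<longrightarrow> \<bar>rho2 y - rho2 z\<bar> < \<eta>)"
    proof (elim conjE disjE)
      assume h: "\<forall>y\<in>{a..b}. dist y x0 < r x0 \<longrightarrow> \<bar>rho1 y - rho1 x0\<bar> < \<eta>/2"
      show ?thesis
      proof (rule disjI1, intro ballI impI)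
        fix y z assume "y \<in> {a..b}" "z \<in> {a..b}" "\<bar>y - x\<bar> \<le> e/2" "\<bar>z - x\<bar> \<le> e/2"
        with h inb have "\<bar>rho1 y - rho1 x0\<bar> < \<eta>/2" "\<bar>rho1 z - rho1 x0\<bar> < \<eta>/2" by auto
        then show "\<bar>rho1 y - rho1 z\<bar> < \<eta>" by linarith
      qed
    next
      assume h: "\<forall>y\<in>{a..b}. dist y x0 < r x0 \<longrightarrow> \<bar>rho2 y - rho2 x0\<bar> < \<eta>/2"
      show ?thesis
      proof (rule disjI2, intro ballI impI)
        fix y z assume "y \<in> {a..b}" "z \<in> {a..b}" "\<bar>y - x\<bar> \<le> e/2" "\<bar>z - x\<bar> \<le> e/2"
        with h inb have "\<bar>rho2 y - rho2 x0\<bar> < \<eta>/2" "\<bar>rho2 z - rho2 x0\<bar> < \<eta>/2" by auto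
        then show "\<bar>rho2 y - rho2 z\<bar> < \<eta>" by linarith
      qed
    qed
  qed
qed

lemma inf_add:
  fixes N N' :: "real set" and f g :: "real \<Rightarrow> real"
  assumes "N \<noteq> {}" "N \<subseteq> N'" "bdd_below (f`N)" "bdd_below (g`N)"
    "bdd_below ((\<lambda>y. f y + g y) ` N')" "\<forall>y\<in>N. \<forall>z\<in>N. \<bar>g y - g z\<bar> < \<eta>" "\<eta> > 0"
  shows "(INF y\<in>N'. f y + g y) \<le> (INF y\<in>N. f y) + (INF y\<in>N. g y) + 2*\<eta>"
proof -
  have "(INF y\<in>N. f y) < (INF y\<in>N. f y) + \<eta>" using assms by simp
  then obtain y where y: "y \<in> N" "f y < (INF y\<in>N. f y) + \<eta>"
    using cINF_less_iff[OF assms(1,3)] by blast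
  have "g y - \<eta> \<le> (INF y\<in>N. g y)"
  proof (rule cINF_greatest[OF assms(1)])
    fix z assume "z \<in> N"
    with assms(6) y have "\<bar>g y - g z\<bar> < \<eta>" by blast
    then show "g y - \<eta> \<le> g z" by linarith
  qed
  moreover have "(INF y\<in>N'. f y + g y) \<le> f y + g y"
    using cINF_lower[OF assms(5)] y assms(2) by blast
  ultimately show ?thesis using y by linarith
qed

lemma sup_add:
  fixes N N' :: "real set" and f g :: "real \<Rightarrow> real"
  assumes "N \<noteq> {}" "N \<subseteq> N'" "bdd_above (f`N)" "bdd_above (g`N)"
    "bdd_above ((\<lambda>y. f y + g y) ` N')" "\<forall>y\<in>N. \<forall>z\<in>N. \<bar>g y - g z\<bar> < \<eta>" "\<eta> > 0"
  shows "(SUP y\<in>N. f y) + (SUP y\<in>N. g y) - 2*\<eta> \<le> (SUP y\<in>N'. f y + g y)"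
proof -
  have "(SUP y\<in>N. f y) - \<eta> < (SUP y\<in>N. f y)" using assms by simp
  then obtain y where y: "y \<in> N" "(SUP y\<in>N. f y) - \<eta> < f y"
    using less_cSUP_iff[OF assms(1,3)] by blast
  have "(SUP y\<in>N. g y) \<le> g y + \<eta>"
  proof (rule cSUP_least[OF assms(1)])
    fix z assume "z \<in> N"
    with assms(6) y have "\<bar>g y - g z\<bar> < \<eta>" by blast
    then show "g z \<le> g y + \<eta>" by linarith
  qed
  moreover have "f y + g y \<le> (SUP y\<in>N'. f y + g y)"
    using cSUP_upper[OF _ assms(5)] y assms(2) by blast
  ultimately show ?thesis using y by linarith
qed

theorem mainTheorem14:
  fixes a b :: real and D1 D2 :: "real set"
    and rho1 rho2 :: "real \<Rightarrow> real" and rho1e rho2e :: "real \<Rightarrow> real \<Rightarrow> real"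
  assumes "a < b"
    and "piecewise_cont_first_kind a b D1 rho1"
    and "piecewise_cont_first_kind a b D2 rho2"
    and "D1 \<inter> D2 = {}"
    and "family_lim a b rho1e rho1"
    and "family_lim a b rho2e rho2"
  shows "family_lim a b (\<lambda>eps x. rho1e eps x + rho2e eps x) (\<lambda>x. rho1 x + rho2 x)"
proof (unfold family_lim_def, intro allI impI)
  fix \<Delta> :: real assume \<Delta>: "\<Delta> > 0"
  define \<eta> where "\<eta> = \<Delta>/4"
  have \<eta>: "\<eta> > 0" using \<Delta> by (simp add: \<eta>_def)
  obtain \<delta> where \<delta>: "\<delta> > 0" and os: "\<forall>x\<in>{a..b}.
    (\<forall>y\<in>{a..b}. \<forall>z\<in>{a..b}. \<bar>y - x\<bar> \<le> \<delta> \<longrightarrow> \<bar>z - x\<bar> \<le> \<delta> \<longrightarrow> \<bar>rho1 y - rho1 z\<bar> < \<eta>) \<or>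
    (\<forall>y\<in>{a..b}. \<forall>z\<in>{a..b}. \<bar>y - x\<bar> \<le> \<delta> \<longrightarrow> \<bar>z - x\<bar> \<le> \<delta> \<longrightarrow> \<bar>rho2 y - rho2 z\<bar> < \<eta>)"
    using osc[OF assms(2,3,4) \<eta>] by blast
  define d where "d = min \<delta> \<eta>"
  have d: "d > 0" "d \<le> \<delta>" "d \<le> \<eta>" using \<delta> \<eta> by (auto simp: d_def)
  obtain e1 where e1: "e1 > 0" "\<forall>eps. 0 < eps \<and> eps < e1 \<longrightarrow> in_O a b (rho1e eps) rho1 d"
    using assms(5) d(1) unfolding family_lim_def by blast
  obtain e2 where e2: "e2 > 0" "\<forall>eps. 0 < eps \<and> eps < e2 \<longrightarrow> in_O a b (rho2e eps) rho2 d"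
    using assms(6) d(1) unfolding family_lim_def by blast
  obtain M1 where M1: "\<forall>y\<in>{a..b}. \<bar>rho1 y\<bar> \<le> M1" using global_bdd[OF assms(2)] by blast
  obtain M2 where M2: "\<forall>y\<in>{a..b}. \<bar>rho2 y\<bar> \<le> M2" using global_bdd[OF assms(3)] by blast
  show "\<exists>eps0>0. \<forall>eps. 0 < eps \<and> eps < eps0 \<longrightarrow>
      in_O a b ((\<lambda>eps x. rho1e eps x + rho2e eps x) eps) (\<lambda>x. rho1 x + rho2 x) \<Delta>"
  proof (intro exI[of _ "min e1 e2"] conjI allI impI)
    show "min e1 e2 > 0" using e1 e2 by simp
    fix eps assume eps: "0 < eps \<and> eps < min e1 e2"
    have h1: "in_O a b (rho1e eps) rho1 d" using e1 eps by simp
    have h2: "in_O a b (rho2e eps) rho2 d" using e2 eps by simp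
    show "in_O a b ((\<lambda>eps x. rho1e eps x + rho2e eps x) eps) (\<lambda>x. rho1 x + rho2 x) \<Delta>"
      unfolding in_O_def
    proof (intro ballI)
      fix x assume x: "x \<in> {a..b}"
      define N where "N = {y\<in>{a..b}. \<bar>y - x\<bar> \<le> d}"
      define N' where "N' = {y\<in>{a..b}. \<bar>y - x\<bar> \<le> \<Delta>}"
      have Nne: "N \<noteq> {}" using x d by (auto simp: N_def)
      have NN': "N \<subseteq> N'" using d \<eta>_def by (auto simp: N_def N'_def)
      have NS: "N \<subseteq> {a..b}" "N' \<subseteq> {a..b}" by (auto simp: N_def N'_def)
      have B1: "-M1 \<le> rho1 y \<and> rho1 y \<le> M1" if "y \<in> {a..b}" for y
        using M1 that by (metis abs_le_iff minus_le_iff)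
      have B2: "-M2 \<le> rho2 y \<and> rho2 y \<le> M2" if "y \<in> {a..b}" for y
        using M2 that by (metis abs_le_iff minus_le_iff)
      have b1: "bdd_below (rho1`N)" "bdd_above (rho1`N)" "bdd_below (rho2`N)" "bdd_above (rho2`N)"
        using B1 B2 NS
        by (force intro!: bdd_belowI2[where m="-M1"], force intro!: bdd_aboveI2[where M="M1"],
            force intro!: bdd_belowI2[where m="-M2"], force intro!: bdd_aboveI2[where M="M2"])
      have b2: "bdd_below ((\<lambda>y. rho1 y + rho2 y)`N')" "bdd_above ((\<lambda>y. rho1 y + rho2 y)`N')"
        "bdd_below ((\<lambda>y. rho2 y + rho1 y)`N')" "bdd_above ((\<lambda>y. rho2 y + rho1 y)`N')"
      proof -
        have "y \<in> N' \<Longrightarrow> -M1-M2 \<le> rho1 y + rho2 y \<and> rho1 y + rho2 y \<le> M1 + M2" for y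
          using B1[of y] B2[of y] NS by auto
        then show "bdd_below ((\<lambda>y. rho1 y + rho2 y)`N')" "bdd_above ((\<lambda>y. rho1 y + rho2 y)`N')"
          "bdd_below ((\<lambda>y. rho2 y + rho1 y)`N')" "bdd_above ((\<lambda>y. rho2 y + rho1 y)`N')"
          by (auto intro!: bdd_belowI2[where m="-M1-M2"] bdd_aboveI2[where M="M1+M2"]; metis add.commute)+
      qed
      have c1: "(INF y\<in>N. rho1 y) - d < rho1e eps x \<and> rho1e eps x < (SUP y\<in>N. rho1 y) + d"
        using h1 x unfolding in_O_def N_def by blast
      have c2: "(INF y\<in>N. rho2 y) - d < rho2e eps x \<and> rho2e eps x < (SUP y\<in>N. rho2 y) + d"
        using h2 x unfolding in_O_def N_def by blast
      have comm: "(\<lambda>y. rho2 y + rho1 y) = (\<lambda>y. rho1 y + rho2 y)" by (simp add: fun_eq_iff)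
      have key: "(INF y\<in>N'. rho1 y + rho2 y) \<le> (INF y\<in>N. rho1 y) + (INF y\<in>N. rho2 y) + 2*\<eta> \<and>
                 (SUP y\<in>N. rho1 y) + (SUP y\<in>N. rho2 y) - 2*\<eta> \<le> (SUP y\<in>N'. rho1 y + rho2 y)"
      proof -
        from os x consider
          "\<forall>y\<in>{a..b}. \<forall>z\<in>{a..b}. \<bar>y - x\<bar> \<le> \<delta> \<longrightarrow> \<bar>z - x\<bar> \<le> \<delta> \<longrightarrow> \<bar>rho1 y - rho1 z\<bar> < \<eta>" |
          "\<forall>y\<in>{a..b}. \<forall>z\<in>{a..b}. \<bar>y - x\<bar> \<le> \<delta> \<longrightarrow> \<bar>z - x\<bar> \<le> \<delta> \<longrightarrow> \<bar>rho2 y - rho2 z\<bar> < \<eta>"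
          by blast
        then show ?thesis
        proof cases
          case 1
          then have o: "\<forall>y\<in>N. \<forall>z\<in>N. \<bar>rho1 y - rho1 z\<bar> < \<eta>" using d by (auto simp: N_def)
          show ?thesis
            using inf_add[OF Nne NN' b1(3) b1(1) b2(3) o \<eta>]
                  sup_add[OF Nne NN' b1(4) b1(2) b2(4) o \<eta>]
            unfolding comm by linarith
        next
          case 2
          then have o: "\<forall>y\<in>N. \<forall>z\<in>N. \<bar>rho2 y - rho2 z\<bar> < \<eta>" using d by (auto simp: N_def)
          show ?thesis
            using inf_add[OF Nne NN' b1(1) b1(3) b2(1) o \<eta>]
                  sup_add[OF Nne NN' b1(2) b1(4) b2(2) o \<eta>]
            by linarith
        qed
      qed
      have "2*\<eta> + 2*d \<le> \<Delta>" using d \<eta>_def by simp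
      then show "(INF y\<in>{y\<in>{a..b}. \<bar>y - x\<bar> \<le> \<Delta>}. rho1 y + rho2 y) - \<Delta>
            < rho1e eps x + rho2e eps x \<and>
          rho1e eps x + rho2e eps x
            < (SUP y\<in>{y\<in>{a..b}. \<bar>y - x\<bar> \<le> \<Delta>}. rho1 y + rho2 y) + \<Delta>"
        using key c1 c2 unfolding N'_def by linarith
    qed
  qed
qed

end
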